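(* For each integer $r\ge 2$, the matrix $A_r$ is $2$-modular.
   Context: An integer matrix $A$ is $\Delta$-modular if the determinant of every $\operatorname{rank}(A)\times\operatorname{rank}(A)$ submatrix has absolute value at most $\Delta$. $D_r$ denotes the $r\times\binom r2$ matrix whose columns are all vectors in $\mathbb{Z}^r$ with exactly two nonzero entries, the first (topmost) equal to $1$ and the second equal to $-1$. $A_r$ is the $r\times(\binom{r+2}{2}-2)$ matrix $[\,I_r\mid D_r\mid B_r\,]$, where $B_r$ is the $r\times(r-1)$ matrix whose first row consists entirely of $1$'s and whose remaining $r-1$ rows form $I_{r-1}$. *)

theory Defs
  imports "Jordan_Normal_Form.DL_Rank_Submatrix"
begin

definition int_mat_rank :: "int mat \<Rightarrow> nat" where
  "int_mat_rank A = vec_space.rank (dim_row A) (map_mat rat_of_int A :: rat mat)"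

definition delta_modular :: "int \<Rightarrow> int mat \<Rightarrow> bool" where
  "delta_modular \<Delta> A \<longleftrightarrow>
     (\<forall>I J. I \<subseteq> {..<dim_row A} \<longrightarrow> J \<subseteq> {..<dim_col A} \<longrightarrow>
            card I = int_mat_rank A \<longrightarrow> card J = int_mat_rank A \<longrightarrow>
            \<bar>det (submatrix A I J)\<bar> \<le> \<Delta>)"

definition I_cols :: "nat \<Rightarrow> int vec list" where
  "I_cols r = [unit_vec r i. i \<leftarrow> [0..<r]]"

definition D_cols :: "nat \<Rightarrow> int vec list" where
  "D_cols r = [vec r (\<lambda>k. if k = i then 1 else if k = j then -1 else 0).
                 i \<leftarrow> [0..<r], j \<leftarrow> [Suc i..<r]]"

(* columns of B_r: first row all ones, remaining r-1 rows form I_{r-1} *)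
definition B_cols :: "nat \<Rightarrow> int vec list" where
  "B_cols r = [vec r (\<lambda>k. if k = 0 \<or> k = Suc c then 1 else 0). c \<leftarrow> [0..<r - 1]]"

definition D_mat :: "nat \<Rightarrow> int mat" where
  "D_mat r = mat_of_cols r (D_cols r)"

definition B_mat :: "nat \<Rightarrow> int mat" where
  "B_mat r = mat_of_cols r (B_cols r)"

definition A_mat :: "nat \<Rightarrow> int mat" where
  "A_mat r = mat_of_cols r (I_cols r @ D_cols r @ B_cols r)"

end

theory Submission
  imports Defs
begin

lemma pick_lessThan: "j < r \<Longrightarrow> pick {..<r} j = j"
proof (induction j)
  case 0
  then show ?case by (simp add: Least_eq_0)
next
  case (Suc j)
  then have "pick {..<r} j = j" by simp
  then show ?case using Suc.prems
    by (auto intro!: Least_equality)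
qed

lemma A_dim: "A_mat r \<in> carrier_mat r (length (I_cols r @ D_cols r @ B_cols r))"
  unfolding A_mat_def by (rule mat_of_cols_carrier)

lemma len_I: "length (I_cols r) = r" unfolding I_cols_def by simp

lemma rank_ge: "r \<ge> 1 \<Longrightarrow> int_mat_rank (A_mat r) \<ge> r"
proof -
  assume r: "r \<ge> 1"
  define nc where "nc = length (I_cols r @ D_cols r @ B_cols r)"
  have nc: "r \<le> nc" unfolding nc_def using len_I by simp
  define Aq where "Aq = (map_mat rat_of_int (A_mat r) :: rat mat)"
  have Aq: "Aq \<in> carrier_mat r nc" unfolding Aq_def nc_def using A_dim by auto
  have sub: "submatrix Aq UNIV {..<r} = 1\<^sub>m r"
  proof (rule eq_matI)
    have c1: "card {i. i < dim_row Aq \<and> i \<in> UNIV} = r" using Aq by auto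
    have c2: "{j. j < dim_col Aq \<and> j \<in> {..<r}} = {..<r}" using Aq nc by auto
    show "dim_row (submatrix Aq UNIV {..<r}) = dim_row (1\<^sub>m r)" using c1 by (simp add: dim_submatrix)
    show "dim_col (submatrix Aq UNIV {..<r}) = dim_col (1\<^sub>m r)" using c2 by (simp add: dim_submatrix)
    fix i j assume "i < dim_row (1\<^sub>m r)" "j < dim_col (1\<^sub>m r)"
    then have ij: "i < r" "j < r" by auto
    have "submatrix Aq UNIV {..<r} $$ (i,j) = Aq $$ (pick UNIV i, pick {..<r} j)"
      by (rule submatrix_index) (use c1 c2 ij in auto)
    also have "\<dots> = Aq $$ (i, j)" using ij by (simp add: pick_UNIV pick_lessThan)
    also have "\<dots> = rat_of_int (A_mat r $$ (i,j))" unfolding Aq_def using Aq ij nc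
      by (auto simp: Aq_def)
    also have "A_mat r $$ (i,j) = (I_cols r @ D_cols r @ B_cols r) ! j $ i"
      unfolding A_mat_def using ij nc unfolding nc_def by (simp add: mat_of_cols_index)
    also have "\<dots> = unit_vec r j $ i" using ij len_I by (simp add: nth_append I_cols_def)
    finally show "submatrix Aq UNIV {..<r} $$ (i,j) = 1\<^sub>m r $$ (i,j)" using ij by simp
  qed
  have "det (submatrix Aq UNIV {..<r}) \<noteq> 0" unfolding sub by simp
  from vec_space.rank_gt_minor[OF Aq this]
  have "card {j. j < nc \<and> j \<in> {..<r}} \<le> vec_space.rank r Aq" .
  moreover have "{j. j < nc \<and> j \<in> {..<r}} = {..<r}" using nc by auto
  moreover have "dim_row (A_mat r) = r" using A_dim[of r] by auto
  ultimately show ?thesis unfolding int_mat_rank_def Aq_def by simp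
qed

definition tu_col :: "int mat \<Rightarrow> nat \<Rightarrow> nat \<Rightarrow> bool" where
  "tu_col M n j \<longleftrightarrow> (\<forall>i<n. M$$(i,j) \<in> {-1,0,1}) \<and>
     (\<forall>a<n. \<forall>b<n. M$$(a,j) = 1 \<longrightarrow> M$$(b,j) = 1 \<longrightarrow> a = b) \<and>
     (\<forall>a<n. \<forall>b<n. M$$(a,j) = -1 \<longrightarrow> M$$(b,j) = -1 \<longrightarrow> a = b)"

lemma mat_delete_idx:
  assumes "M \<in> carrier_mat (Suc m) (Suc m)" "i' < m" "j' < m"
  shows "mat_delete M i j $$ (i',j') = M $$ (if i' < i then i' else Suc i', if j' < j then j' else Suc j')"
  using assms unfolding mat_delete_def by auto

lemma tu_col_delete:
  assumes M: "M \<in> carrier_mat (Suc m) (Suc m)" and j': "j' < m"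
    and tu: "tu_col M (Suc m) (if j' < j then j' else Suc j')"
  shows "tu_col (mat_delete M i j) m j'"
proof -
  let ?f = "\<lambda>i'. if i' < i then i' else Suc i'"
  have inj: "\<And>a b. ?f a = ?f b \<Longrightarrow> a = b" by (auto split: if_splits)
  have lt: "\<And>a. a < m \<Longrightarrow> ?f a < Suc m" by auto
  show ?thesis using tu unfolding tu_col_def
    apply (intro conjI allI impI)
    subgoal for a using lt[of a] by (simp add: mat_delete_idx[OF M _ j'])
    subgoal for a b using lt[of a] lt[of b] inj[of a b] by (simp add: mat_delete_idx[OF M _ j'])
    subgoal for a b using lt[of a] lt[of b] inj[of a b] by (simp add: mat_delete_idx[OF M _ j'])
    done
qed

lemma det_0_carrier: "M \<in> carrier_mat 0 0 \<Longrightarrow> det M = 1"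
  by (simp add: det_def)

lemma tu_det: "M \<in> carrier_mat n n \<Longrightarrow> \<forall>j<n. tu_col M n j \<Longrightarrow> \<bar>det M\<bar> \<le> 1"
proof (induction n arbitrary: M)
  case 0
  then show ?case by (simp add: det_0_carrier)
next
  case (Suc m)
  note M = Suc.prems(1)
  show ?case
  proof (cases "\<exists>j<Suc m. \<not> ((\<exists>a<Suc m. M$$(a,j) = 1) \<and> (\<exists>b<Suc m. M$$(b,j) = -1))")
    case True
    then obtain j where j: "j < Suc m" and nj: "\<not> ((\<exists>a<Suc m. M$$(a,j) = 1) \<and> (\<exists>b<Suc m. M$$(b,j) = -1))" by blast
    have tuj: "tu_col M (Suc m) j" using Suc.prems j by auto
    obtain i0 where i0: "i0 < Suc m" and z: "\<forall>i<Suc m. i \<noteq> i0 \<longrightarrow> M$$(i,j) = 0"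
    proof (cases "\<exists>a<Suc m. M$$(a,j) \<noteq> 0")
      case True
      then obtain a where a: "a < Suc m" "M$$(a,j) \<noteq> 0" by blast
      have "\<forall>i<Suc m. i \<noteq> a \<longrightarrow> M$$(i,j) = 0"
      proof (intro allI impI)
        fix i assume i: "i < Suc m" "i \<noteq> a"
        show "M$$(i,j) = 0"
          using tuj a i nj unfolding tu_col_def by (metis insertE singletonD)
      qed
      then show ?thesis using a that by blast
    next
      case False
      then show ?thesis using that[of 0] by auto
    qed
    have "det M = (\<Sum>i<Suc m. M $$ (i,j) * cofactor M i j)"
      by (rule laplace_expansion_column[OF M j])
    also have "\<dots> = (\<Sum>i\<in>{i0}. M $$ (i,j) * cofactor M i j)"
      by (rule sum.mono_neutral_right) (use i0 z in auto)
    also have "\<dots> = M $$ (i0,j) * cofactor M i0 j" by simp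
    finally have d: "det M = M $$ (i0,j) * cofactor M i0 j" .
    have md: "mat_delete M i0 j \<in> carrier_mat m m" using mat_delete_carrier[OF M] by simp
    have "\<forall>j'<m. tu_col (mat_delete M i0 j) m j'"
    proof (intro allI impI)
      fix j' assume j': "j' < m"
      have "(if j' < j then j' else Suc j') < Suc m" using j' by auto
      then have "tu_col M (Suc m) (if j' < j then j' else Suc j')" using Suc.prems by blast
      then show "tu_col (mat_delete M i0 j) m j'" by (rule tu_col_delete[OF M j'])
    qed
    from Suc.IH[OF md this] have c: "\<bar>cofactor M i0 j\<bar> \<le> 1"
      unfolding cofactor_def by (simp add: abs_mult)
    have e: "\<bar>M $$ (i0,j)\<bar> \<le> 1" using tuj i0 unfolding tu_col_def by auto
    have "\<bar>det M\<bar> = \<bar>M $$ (i0,j)\<bar> * \<bar>cofactor M i0 j\<bar>" unfolding d by (simp add: abs_mult)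
    also have "\<dots> \<le> 1 * 1" by (rule mult_mono) (use c e in auto)
    finally show ?thesis by simp
  next
    case False
    let ?v = "vec (Suc m) (\<lambda>_. 1 :: int)"
    have "transpose_mat M *\<^sub>v ?v = 0\<^sub>v (Suc m)"
    proof (rule eq_vecI)
      show "dim_vec (transpose_mat M *\<^sub>v ?v) = dim_vec (0\<^sub>v (Suc m))" using M by simp
      fix j assume "j < dim_vec (0\<^sub>v (Suc m))"
      then have j: "j < Suc m" by simp
      obtain a b where a: "a < Suc m" "M$$(a,j) = 1" and b: "b < Suc m" "M$$(b,j) = -1"
        using False j by blast
      have tuj: "tu_col M (Suc m) j" using Suc.prems j by auto
      have ab: "a \<noteq> b" using a b by auto
      have oth: "\<And>i. i < Suc m \<Longrightarrow> i \<noteq> a \<Longrightarrow> i \<noteq> b \<Longrightarrow> M$$(i,j) = 0"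
        using tuj a b unfolding tu_col_def by (metis insertE singletonD)
      have "(transpose_mat M *\<^sub>v ?v) $ j = (\<Sum>i<Suc m. M$$(i,j))"
        using M j by (simp add: scalar_prod_def row_transpose col_def lessThan_atLeast0)
      also have "\<dots> = (\<Sum>i\<in>{a,b}. M$$(i,j))"
        by (rule sum.mono_neutral_right) (use a b oth in auto)
      also have "\<dots> = 0" using a b ab by simp
      finally show "(transpose_mat M *\<^sub>v ?v) $ j = 0\<^sub>v (Suc m) $ j" using j by simp
    qed
    moreover have "?v \<noteq> 0\<^sub>v (Suc m)"
      by (metis index_vec index_zero_vec(1) zero_less_Suc zero_neq_one)
    moreover have Mt: "transpose_mat M \<in> carrier_mat (Suc m) (Suc m)" using M by simp
    ultimately have "det (transpose_mat M) = 0"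
      unfolding det_0_iff_vec_prod_zero[OF Mt] by (intro exI[of _ ?v]) auto
    then have "det M = 0" using det_transpose[OF M] by simp
    then show ?thesis by simp
  qed
qed

lemma sub_cols:
  assumes M: "M \<in> carrier_mat n n" and j0: "j0 < n"
    and fin: "finite S" and S: "S \<subseteq> {..<n}" "j0 \<notin> S"
  shows "det (mat n n (\<lambda>(i,j). if j \<in> S then M$$(i,j) - M$$(i,j0) else M$$(i,j))) = det M"
  using fin S
proof (induction S rule: finite_induct)
  case empty
  have "mat n n (\<lambda>(i,j). if j \<in> {} then M$$(i,j) - M$$(i,j0) else M$$(i,j)) = M"
    by (rule eq_matI) (use M in auto)
  then show ?case by simp
next
  case (insert s S)
  let ?MS = "mat n n (\<lambda>(i,j). if j \<in> S then M$$(i,j) - M$$(i,j0) else M$$(i,j))"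
  have MS: "?MS \<in> carrier_mat n n" by simp
  have s: "s < n" "s \<noteq> j0" using insert by auto
  have "mat n n (\<lambda>(i,j). if j \<in> insert s S then M$$(i,j) - M$$(i,j0) else M$$(i,j))
        = addcol (-1) s j0 ?MS"
    by (rule eq_matI) (use insert j0 in auto)
  also have "det \<dots> = det ?MS" by (rule det_addcol[OF j0 s(2) MS])
  also have "\<dots> = det M" using insert by auto
  finally show ?case .
qed

lemma two_bound:
  assumes M: "M \<in> carrier_mat n n" and j0: "j0 < n" and k: "0 < k" "k < n"
    and cj0: "\<forall>i<n. M$$(i,j0) = (if i = 0 \<or> i = k then 1 else 0)"
    and tu: "\<forall>j<n. j \<noteq> j0 \<longrightarrow> tu_col M n j"
  shows "\<bar>det M\<bar> \<le> 2"
proof -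
  obtain m where n: "n = Suc m" using j0 by (cases n) auto
  note M' = M[unfolded n]
  have cof: "\<bar>cofactor M i j0\<bar> \<le> 1" if i: "i < n" for i
  proof -
    have md: "mat_delete M i j0 \<in> carrier_mat m m" using mat_delete_carrier[OF M'] by simp
    have "\<forall>j'<m. tu_col (mat_delete M i j0) m j'"
    proof (intro allI impI)
      fix j' assume j': "j' < m"
      have "(if j' < j0 then j' else Suc j') < Suc m" "(if j' < j0 then j' else Suc j') \<noteq> j0"
        using j' by auto
      then have "tu_col M (Suc m) (if j' < j0 then j' else Suc j')" using tu n by auto
      then show "tu_col (mat_delete M i j0) m j'" by (rule tu_col_delete[OF M' j'])
    qed
    from tu_det[OF md this] show ?thesis unfolding cofactor_def by (simp add: abs_mult)
  qed
  have "det M = (\<Sum>i<n. M $$ (i,j0) * cofactor M i j0)"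
    by (rule laplace_expansion_column[OF M j0])
  also have "\<dots> = (\<Sum>i\<in>{0,k}. M $$ (i,j0) * cofactor M i j0)"
    by (rule sum.mono_neutral_right) (use k cj0 in auto)
  also have "\<dots> = cofactor M 0 j0 + cofactor M k j0" using k cj0 by simp
  finally have "\<bar>det M\<bar> \<le> \<bar>cofactor M 0 j0\<bar> + \<bar>cofactor M k j0\<bar>" by simp
  also have "\<dots> \<le> 1 + 1" using cof[of 0] cof[of k] k by (intro add_mono) auto
  finally show ?thesis by simp
qed

lemma main_bound:
  assumes M: "M \<in> carrier_mat n n"
    and cols: "\<forall>j<n. tu_col M n j \<or> (\<exists>k. 0 < k \<and> k < n \<and> (\<forall>i<n. M$$(i,j) = (if i = 0 \<or> i = k then 1 else 0)))"
  shows "\<bar>det M\<bar> \<le> 2"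
proof (cases "\<forall>j<n. tu_col M n j")
  case True
  then show ?thesis using tu_det[OF M] by force
next
  case False
  define Bs where "Bs = {j. j < n \<and> \<not> tu_col M n j}"
  obtain j0 where j0: "j0 < n" "\<not> tu_col M n j0" using False by blast
  obtain k0 where k0: "0 < k0" "k0 < n" "\<forall>i<n. M$$(i,j0) = (if i = 0 \<or> i = k0 then 1 else 0)"
    using cols j0 by blast
  define S where "S = Bs - {j0}"
  let ?M' = "mat n n (\<lambda>(i,j). if j \<in> S then M$$(i,j) - M$$(i,j0) else M$$(i,j))"
  have S: "finite S" "S \<subseteq> {..<n}" "j0 \<notin> S" unfolding S_def Bs_def by auto
  have d: "det ?M' = det M" by (rule sub_cols[OF M j0(1) S])
  have "\<bar>det ?M'\<bar> \<le> 2"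
  proof (rule two_bound[OF _ j0(1) k0(1,2)])
    show "?M' \<in> carrier_mat n n" by simp
    show "\<forall>i<n. ?M' $$ (i,j0) = (if i = 0 \<or> i = k0 then 1 else 0)" using k0 S j0 by auto
    show "\<forall>j<n. j \<noteq> j0 \<longrightarrow> tu_col ?M' n j"
    proof (intro allI impI)
      fix j assume j: "j < n" "j \<noteq> j0"
      show "tu_col ?M' n j"
      proof (cases "j \<in> S")
        case True
        then have "\<not> tu_col M n j" unfolding S_def Bs_def by auto
        then obtain k where k: "0 < k" "k < n" "\<forall>i<n. M$$(i,j) = (if i = 0 \<or> i = k then 1 else 0)"
          using cols j by blast
        have e: "\<forall>i<n. ?M' $$ (i,j) = (if i = k then 1 else 0) - (if i = k0 then 1 else 0)"
          using True k k0 j by auto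
        show ?thesis unfolding tu_col_def using e by auto
      next
        case False
        then have "tu_col M n j" unfolding S_def Bs_def using j by auto
        moreover have "\<forall>i<n. ?M' $$ (i,j) = M $$ (i,j)" using False j by auto
        ultimately show ?thesis unfolding tu_col_def by auto
      qed
    qed
  qed
  then show ?thesis using d by simp
qed

definition vprop :: "nat \<Rightarrow> int vec \<Rightarrow> bool" where
  "vprop r v \<longleftrightarrow> ((\<forall>i<r. v$i \<in> {-1,0,1}) \<and>
     (\<forall>a<r. \<forall>b<r. v$a = 1 \<longrightarrow> v$b = 1 \<longrightarrow> a = b) \<and>
     (\<forall>a<r. \<forall>b<r. v$a = -1 \<longrightarrow> v$b = -1 \<longrightarrow> a = b)) \<or>
     (\<exists>k. 0 < k \<and> k < r \<and> (\<forall>i<r. v$i = (if i = 0 \<or> i = k then 1 else 0)))"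

lemma vprop_all: "\<forall>v\<in>set (I_cols r @ D_cols r @ B_cols r). vprop r v"
proof -
  have "vprop r v" if vin: "v \<in> set (I_cols r)" for v
  proof -
    obtain c where c: "c < r" "v = unit_vec r c" using vin unfolding I_cols_def by fastforce
    show ?thesis unfolding vprop_def c(2) by (intro disjI1) (auto simp: unit_vec_def)
  qed
  moreover have "vprop r v" if vin: "v \<in> set (D_cols r)" for v
  proof -
    obtain a b where ab: "a < b" "b < r" "v = vec r (\<lambda>k. if k = a then 1 else if k = b then -1 else 0)"
      using vin unfolding D_cols_def by (auto simp: Suc_le_eq)
    show ?thesis unfolding vprop_def ab(3) by (intro disjI1) (use ab in auto)
  qed
  moreover have "vprop r v" if vin: "v \<in> set (B_cols r)" for v
  proof -
    obtain c where c: "c < r - 1" "v = vec r (\<lambda>k. if k = 0 \<or> k = Suc c then 1 else 0)"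
      using vin unfolding B_cols_def by auto
    show ?thesis unfolding vprop_def c(2) by (intro disjI2 exI[of _ "Suc c"]) (use c in auto)
  qed
  ultimately show ?thesis by auto
qed

theorem lemma3p1:
  fixes r :: nat
  assumes "r \<ge> 2"
  shows "delta_modular 2 (A_mat r)"
  unfolding delta_modular_def
proof (intro allI impI)
  fix I J
  define L where "L = I_cols r @ D_cols r @ B_cols r"
  define nc where "nc = length L"
  have A: "A_mat r \<in> carrier_mat r nc" unfolding nc_def L_def by (rule A_dim)
  assume IJ: "I \<subseteq> {..<dim_row (A_mat r)}" "J \<subseteq> {..<dim_col (A_mat r)}"
    "card I = int_mat_rank (A_mat r)" "card J = int_mat_rank (A_mat r)"
  have rk: "int_mat_rank (A_mat r) \<ge> r" using rank_ge assms by simp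
  have Ir: "I \<subseteq> {..<r}" using IJ A by auto
  have "card I \<le> r" using card_mono[OF _ Ir] by simp
  then have cI: "card I = r" using IJ(3) rk by simp
  then have Ieq: "I = {..<r}" using card_subset_eq[OF _ Ir] by simp
  have Jn: "J \<subseteq> {..<nc}" using IJ A by auto
  have cJ: "card J = r" using IJ rk cI by simp
  define M where "M = submatrix (A_mat r) I J"
  have rowset: "{i. i < dim_row (A_mat r) \<and> i \<in> I} = {..<r}" using A Ieq by auto
  have colset: "{j. j < dim_col (A_mat r) \<and> j \<in> J} = J" using A Jn by auto
  have dr: "dim_row M = r" unfolding M_def dim_submatrix(1) rowset by simp
  have dc: "dim_col M = r" unfolding M_def dim_submatrix(2) colset cJ by (rule refl)
  have Mc: "M \<in> carrier_mat r r" using dr dc by (rule carrier_matI)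
  have idx: "M $$ (i,j) = L ! (pick J j) $ i" if ij: "i < r" "j < r" for i j
  proof -
    have j1: "j < card {j. j < dim_col (A_mat r) \<and> j \<in> J}" using colset cJ ij by simp
    have pj: "pick J j < nc"
      using pick_le[of j nc J] j1 A by simp
    have "M $$ (i,j) = A_mat r $$ (pick I i, pick J j)" unfolding M_def
      by (rule submatrix_index) (use rowset j1 ij in auto)
    also have "\<dots> = A_mat r $$ (i, pick J j)" using Ieq ij by (simp add: pick_lessThan)
    also have "\<dots> = L ! (pick J j) $ i" unfolding A_mat_def L_def
      using ij pj unfolding nc_def L_def by (simp add: mat_of_cols_index)
    finally show ?thesis .
  qed
  have "\<bar>det M\<bar> \<le> 2"
  proof (rule main_bound[OF Mc], intro allI impI)
    fix j assume j: "j < r"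
    have j1: "j < card {j. j < dim_col (A_mat r) \<and> j \<in> J}" using colset cJ j by simp
    have pj: "pick J j < nc" using pick_le[of j nc J] j1 A by simp
    then have "L ! pick J j \<in> set L" unfolding nc_def by (rule nth_mem)
    then have vp: "vprop r (L ! pick J j)" using vprop_all[of r, folded L_def] by blast
    have e: "\<And>i. i < r \<Longrightarrow> M$$(i,j) = L ! pick J j $ i" using idx j by blast
    show "tu_col M r j \<or> (\<exists>k>0. k < r \<and> (\<forall>i<r. M $$ (i, j) = (if i = 0 \<or> i = k then 1 else 0)))"
      using vp[unfolded vprop_def]
    proof (elim disjE)
      assume h: "(\<forall>i<r. L ! pick J j $ i \<in> {-1,0,1}) \<and>
     (\<forall>a<r. \<forall>b<r. L ! pick J j $ a = 1 \<longrightarrow> L ! pick J j $ b = 1 \<longrightarrow> a = b) \<and>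
     (\<forall>a<r. \<forall>b<r. L ! pick J j $ a = -1 \<longrightarrow> L ! pick J j $ b = -1 \<longrightarrow> a = b)"
      have "tu_col M r j" unfolding tu_col_def
        using h by (simp add: e del: insert_iff)
      then show ?thesis ..
    next
      assume "\<exists>k. 0 < k \<and> k < r \<and> (\<forall>i<r. L ! pick J j $ i = (if i = 0 \<or> i = k then 1 else 0))"
      then obtain k where k: "0 < k" "k < r" "\<forall>i<r. L ! pick J j $ i = (if i = 0 \<or> i = k then 1 else 0)" by blast
      show ?thesis by (intro disjI2 exI[of _ k]) (simp add: e k)
    qed
  qed
  then show "\<bar>det (submatrix (A_mat r) I J)\<bar> \<le> 2" unfolding M_def .
qed

end
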